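(* Let $m,n$ be positive integers and let $B=(B(i_1,\dots,i_{2m}))_{1\le i_1,\dots,i_{2m}\le 2n}$ change sign when $i_{2s-1}$ and $i_{2s}$ are interchanged, for each $1\le s\le m$. Let $M=(M(i_1,\dots,i_{2m}))_{1\le i_1,\dots,i_{2m}\le 2mn}$ be the fully antisymmetric array (i.e. $M(i_{\tau(1)},\dots,i_{\tau(2m)})=\mathrm{sgn}(\tau)M(i_1,\dots,i_{2m})$ for all $\tau\in\mathfrak{S}_{2m}$) determined by the following values for $i_1<\cdots<i_{2m}$: if there exist $1\le r_1,\dots,r_{2m}\le 2n$ with $i_{2s-1}=2n(s-1)+r_{2s-1}$ and $i_{2s}=2n(s-1)+r_{2s}$ for all $1\le s\le m$, then $M(i_1,\dots,i_{2m})=B(r_1,\dots,r_{2m})$; otherwise $M(i_1,\dots,i_{2m})=0$. Then $\mathrm{Pf}^{[2m]}(B)=\mathrm{BPf}^{[2m]}(M)$.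
   Context: With $\mathfrak{E}_{2n}=\{\sigma\in\mathfrak{S}_{2n}:\sigma(2i-1)<\sigma(2i),\ 1\le i\le n\}$, $\mathrm{Pf}^{[2m]}(B):=\frac{1}{n!}\sum_{\sigma_1,\dots,\sigma_m\in\mathfrak{E}_{2n}}\prod_s\mathrm{sgn}(\sigma_s)\prod_{i=1}^nB(\sigma_1(2i-1),\sigma_1(2i),\dots,\sigma_m(2i-1),\sigma_m(2i))$. Barvinok's hyperpfaffian of a fully antisymmetric array $M$ indexed by $\{1,\dots,2mn\}^{2m}$: with $\mathfrak{E}_{2mn,2m}=\{\sigma\in\mathfrak{S}_{2mn}:\sigma(2m(i-1)+1)<\sigma(2m(i-1)+2)<\cdots<\sigma(2mi),\ 1\le i\le n\}$, $$\mathrm{BPf}^{[2m]}(M):=\frac{1}{n!}\sum_{\sigma\in\mathfrak{E}_{2mn,2m}}\mathrm{sgn}(\sigma)\prod_{i=1}^nM(\sigma(2m(i-1)+1),\dots,\sigma(2mi)).$$ *)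

theory Defs
  imports "HOL-Combinatorics.Permutations"
begin

text \<open>Arrays indexed by tuples (i_1,...,i_k) are modelled as functions on lists
(nat list => 'a); only lists of the right length with entries in the right
range matter. Indices are 1-based as in the paper.\<close>

definition Epairs :: "nat \<Rightarrow> (nat \<Rightarrow> nat) set" where
  "Epairs n = {\<sigma>. \<sigma> permutes {1..2*n} \<and> (\<forall>i\<in>{1..n}. \<sigma> (2*i-1) < \<sigma> (2*i))}"

definition hyperpf :: "nat \<Rightarrow> nat \<Rightarrow> (nat list \<Rightarrow> 'a::field_char_0) \<Rightarrow> 'a" where
  "hyperpf m n B = (1 / fact n) *
     (\<Sum>ss \<in> PiE {1..m} (\<lambda>_. Epairs n).
        (\<Prod>s=1..m. of_int (sign (ss s))) *
        (\<Prod>i=1..n. B (concat (map (\<lambda>s. [ss s (2*i-1), ss s (2*i)]) [1..<m+1]))))"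

definition Eblocks :: "nat \<Rightarrow> nat \<Rightarrow> (nat \<Rightarrow> nat) set" where
  "Eblocks m n = {\<sigma>. \<sigma> permutes {1..2*m*n} \<and>
     (\<forall>i\<in>{1..n}. \<forall>j\<in>{1..<2*m}. \<sigma> (2*m*(i-1)+j) < \<sigma> (2*m*(i-1)+j+1))}"

definition barvinok_hpf :: "nat \<Rightarrow> nat \<Rightarrow> (nat list \<Rightarrow> 'a::field_char_0) \<Rightarrow> 'a" where
  "barvinok_hpf m n M = (1 / fact n) *
     (\<Sum>\<sigma> \<in> Eblocks m n. of_int (sign \<sigma>) *
        (\<Prod>i=1..n. M (map \<sigma> [2*m*(i-1)+1..<2*m*i+1])))"

end

theory Submission
  imports Defs
begin

lemma perm_int: "p permutes {a..b::nat} \<Longrightarrow> permutation p"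
  by (rule permutes_imp_permutation[OF finite_atLeastAtMost])

definition liftp :: "nat \<Rightarrow> nat \<Rightarrow> (nat\<Rightarrow>nat) \<Rightarrow> nat \<Rightarrow> nat" where
  "liftp N c p y = (if c < y \<and> y \<le> c + N then c + p (y - c) else y)"

lemma liftp_swap:
  assumes "a \<in> {1..N}" "b \<in> {1..N}" "p permutes {1..N}"
  shows "liftp N c (Transposition.transpose a b \<circ> p) = Transposition.transpose (c+a) (c+b) \<circ> liftp N c p"
proof
  fix y
  show "liftp N c (Transposition.transpose a b \<circ> p) y = (Transposition.transpose (c+a) (c+b) \<circ> liftp N c p) y"
  proof (cases "c < y \<and> y \<le> c + N")
    case True
    then have "p (y - c) \<in> {1..N}" using assms(3) permutes_in_image by fastforce
    then show ?thesis using True by (auto simp: liftp_def transpose_def)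
  next
    case False
    then show ?thesis using assms(1,2) by (auto simp: liftp_def transpose_def)
  qed
qed

lemma liftp_sign:
  assumes "p permutes {1..N}"
  shows "liftp N c p permutes {c+1..c+N} \<and> sign (liftp N c p) = sign p"
  using assms finite_atLeastAtMost
proof (induction rule: permutes_induct)
  case id
  have e0: "liftp N c id = id" by (auto simp: liftp_def)
  show ?case unfolding e0 by (intro conjI permutes_id refl)
next
  case (swap a b p)
  have e: "liftp N c (Transposition.transpose a b \<circ> p) = Transposition.transpose (c+a) (c+b) \<circ> liftp N c p"
    using swap liftp_swap by blast
  have pt: "Transposition.transpose (c+a) (c+b) permutes {c+1..c+N}"
    using swap(1,2) by (intro permutes_swap_id) auto
  have "liftp N c (Transposition.transpose a b \<circ> p) permutes {c+1..c+N}"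
    unfolding e by (rule permutes_compose[OF conjunct1[OF swap.IH] pt])
  moreover have "sign (liftp N c (Transposition.transpose a b \<circ> p)) = sign (Transposition.transpose a b \<circ> p)"
  proof -
    have p1: "permutation (Transposition.transpose (c+a) (c+b))" by (rule permutation_swap_id)
    have p2: "permutation (liftp N c p)" using conjunct1[OF swap.IH] by (rule perm_int)
    have p3: "permutation (Transposition.transpose a b)" by (rule permutation_swap_id)
    have p4: "permutation p" using swap.hyps(4) by (rule perm_int)
    have "sign (Transposition.transpose (c+a) (c+b) \<circ> liftp N c p) = sign (Transposition.transpose (c+a) (c+b)) * sign (liftp N c p)"
      using sign_compose[OF p1 p2] .
    also have "\<dots> = sign (Transposition.transpose a b) * sign p"
      using swap(3) swap.IH by (simp add: sign_swap_id)
    also have "\<dots> = sign (Transposition.transpose a b \<circ> p)" using sign_compose[OF p3 p4] by simp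
    finally show ?thesis unfolding e .
  qed
  ultimately show ?case by blast
qed


definition Lgen :: "nat \<Rightarrow> nat \<Rightarrow> (nat \<Rightarrow> nat \<Rightarrow> nat) \<Rightarrow> nat \<Rightarrow> nat" where
  "Lgen N M ss y = (if 1 \<le> y \<and> y \<le> N*M then N*((y-1) div N) + ss ((y-1) div N + 1) ((y-1) mod N + 1) else y)"

lemma divmod_top:
  fixes N M y :: nat
  assumes "N*M < y" "y \<le> N*M + N"
  shows "(y-1) div N = M \<and> (y-1) mod N = y - 1 - N*M"
proof -
  define d where "d = y - 1 - N*M"
  have d: "y - 1 = N*M + d" "d < N" using assms unfolding d_def by linarith+
  have "(y-1) div N = M" unfolding d(1) using d(2) by simp
  moreover have "(y-1) mod N = d" unfolding d(1) using d(2) by simp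
  ultimately show ?thesis unfolding d_def by simp
qed

lemma Lgen_sign:
  assumes "\<forall>s\<in>{1..M}. ss s permutes {1..N}"
  shows "Lgen N M ss permutes {1..N*M} \<and> sign (Lgen N M ss) = (\<Prod>s=1..M. sign (ss s))"
  using assms
proof (induction M)
  case 0
  have e0: "Lgen N 0 ss = id" by (auto simp: Lgen_def)
  show ?case unfolding e0 by (intro conjI permutes_id) simp
next
  case (Suc M)
  have IH: "Lgen N M ss permutes {1..N*M}" "sign (Lgen N M ss) = (\<Prod>s=1..M. sign (ss s))"
    using Suc by auto
  have pS: "ss (Suc M) permutes {1..N}" using Suc.prems by auto
  have L: "liftp N (N*M) (ss (Suc M)) permutes {N*M+1..N*M+N} \<and> sign (liftp N (N*M) (ss (Suc M))) = sign (ss (Suc M))"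
    using liftp_sign[OF pS] by blast
  have e: "Lgen N (Suc M) ss = liftp N (N*M) (ss (Suc M)) \<circ> Lgen N M ss"
  proof
    fix y
    show "Lgen N (Suc M) ss y = (liftp N (N*M) (ss (Suc M)) \<circ> Lgen N M ss) y"
    proof (cases "1 \<le> y \<and> y \<le> N*M")
      case True
      then have inr: "Lgen N M ss y \<in> {1..N*M}" using IH(1) permutes_in_image by fastforce
      have NM: "N*M \<le> N*Suc M" by simp
      have c1: "1 \<le> y \<and> y \<le> N*Suc M" using True NM by linarith
      have "Lgen N (Suc M) ss y = Lgen N M ss y" unfolding Lgen_def using True c1 by (simp only: if_P if_True)
      moreover have "\<not> (N*M < Lgen N M ss y \<and> Lgen N M ss y \<le> N*M + N)" using inr by simp
      then have "liftp N (N*M) (ss (Suc M)) (Lgen N M ss y) = Lgen N M ss y" unfolding liftp_def by (simp only: if_not_P if_False)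
      ultimately show ?thesis by simp
    next
      case False
      have g0: "Lgen N M ss y = y" unfolding Lgen_def using False by (simp only: if_not_P if_False)
      show ?thesis
      proof (cases "N*M < y \<and> y \<le> N*M + N")
        case True
        have dm: "(y-1) div N = M" "(y-1) mod N = y - 1 - N*M" using divmod_top True by blast+
        have e1: "y - 1 - N * M + 1 = y - N*M" using True by linarith
        have c1: "1 \<le> y \<and> y \<le> N*Suc M" using True by simp
        have "Lgen N (Suc M) ss y = N*M + ss (Suc M) (y - N*M)"
          unfolding Lgen_def using c1 by (simp only: if_P dm e1 Suc_eq_plus1)
        moreover have "liftp N (N*M) (ss (Suc M)) y = N*M + ss (Suc M) (y - N*M)"
          unfolding liftp_def using True by (simp only: if_P if_True)
        ultimately show ?thesis using g0 by simp
      next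
        case False2: False
        have c1: "\<not> (1 \<le> y \<and> y \<le> N*Suc M)" using False False2 by auto
        have "Lgen N (Suc M) ss y = y" unfolding Lgen_def using c1 by (simp only: if_not_P if_False)
        moreover have "liftp N (N*M) (ss (Suc M)) y = y" unfolding liftp_def using False2 by (simp only: if_not_P if_False)
        ultimately show ?thesis using g0 by simp
      qed
    qed
  qed
  have "Lgen N (Suc M) ss permutes {1..N*Suc M}"
    unfolding e
  proof (rule permutes_compose)
    show "Lgen N M ss permutes {1..N * Suc M}" using IH(1) by (rule permutes_subset) auto
    show "liftp N (N * M) (ss (Suc M)) permutes {1..N * Suc M}" using L permutes_subset by fastforce
  qed
  moreover have "sign (Lgen N (Suc M) ss) = (\<Prod>s=1..Suc M. sign (ss s))"
  proof -
    have "permutation (liftp N (N * M) (ss (Suc M)))" using L perm_int by blast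
    moreover have "permutation (Lgen N M ss)" using IH(1) perm_int by blast
    ultimately show ?thesis unfolding e using IH L
      by (simp add: sign_compose mult.commute)
  qed
  ultimately show ?case by blast
qed

definition Dp :: "nat \<Rightarrow> (nat \<Rightarrow> nat) \<Rightarrow> nat \<Rightarrow> nat" where
  "Dp N q y = (if 1 \<le> y \<and> y \<le> 2*N then 2*(q((y-1) div 2 + 1) - 1) + (y-1) mod 2 + 1 else y)"

lemma Dp_swap:
  assumes "a \<in> {1..N}" "b \<in> {1..N}" "p permutes {1..N}"
  shows "Dp N (Transposition.transpose a b \<circ> p) =
     Transposition.transpose (2*a-1) (2*b-1) \<circ> Transposition.transpose (2*a) (2*b) \<circ> Dp N p"
proof
  fix y
  show "Dp N (Transposition.transpose a b \<circ> p) y =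
     (Transposition.transpose (2*a-1) (2*b-1) \<circ> Transposition.transpose (2*a) (2*b) \<circ> Dp N p) y"
  proof (cases "1 \<le> y \<and> y \<le> 2*N")
    case True
    then have "(y-1) div 2 + 1 \<in> {1..N}" by auto
    then have x: "p ((y-1) div 2 + 1) \<in> {1..N}" using assms(3) permutes_in_image by fastforce
    define x where "x = p ((y-1) div 2 + 1)"
    define c where "c = (y-1) mod 2"
    have c2: "c < 2" by (simp add: c_def)
    have x1: "x \<in> {1..N}" using x by (simp add: x_def)
    have T1: "Transposition.transpose a b x \<in> {1..N}" using x1 assms(1,2) by (auto simp: transpose_def)
    have L0: "Dp N (Transposition.transpose a b \<circ> p) y = 2*(Transposition.transpose a b x - 1) + c + 1"
      using True by (simp add: Dp_def x_def c_def)
    have "2*(Transposition.transpose a b x - 1) + c + 1 = 2*Transposition.transpose a b x - 1 + c"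
      using T1 by (cases "Transposition.transpose a b x") auto
    then have L: "Dp N (Transposition.transpose a b \<circ> p) y = 2*Transposition.transpose a b x - 1 + c"
      using L0 by simp
    have R00: "Dp N p y = 2*(x - 1) + c + 1"
      using True by (simp add: Dp_def x_def c_def)
    have "2*(x - 1) + c + 1 = 2*x - 1 + c"
      using x1 by (cases x) auto
    then have R0: "Dp N p y = 2*x - 1 + c" using R00 by simp
    have "Transposition.transpose (2*a-1) (2*b-1) (Transposition.transpose (2*a) (2*b) (2*x - 1 + c))
          = 2*Transposition.transpose a b x - 1 + c"
    proof (cases "c = 0")
      case True
      have xg: "x \<ge> 1" using x1 by simp
      have o: "2*x - 1 \<noteq> 2*a" "2*x - 1 \<noteq> 2*b" using xg by presburger+
      have "Transposition.transpose (2*a-1) (2*b-1) (2*x - 1) = 2*Transposition.transpose a b x - 1"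
        using x1 assms(1,2) by (cases "x = a"; cases "x = b") (auto simp: transpose_def)
      then show ?thesis using True o by (simp add: transpose_def)
    next
      case False
      then have c1: "c = 1" using c2 by simp
      have e1: "2*x - 1 + c = 2*x" using c1 x1 by simp
      have e2: "2*Transposition.transpose a b x - 1 + c = 2*Transposition.transpose a b x" using c1 T1 by simp
      have ag: "a \<ge> 1" "b \<ge> 1" using assms(1,2) by auto
      have o: "2*Transposition.transpose a b x \<noteq> 2*a-1" "2*Transposition.transpose a b x \<noteq> 2*b-1"
        using ag by presburger+
      have "Transposition.transpose (2*a) (2*b) (2*x) = 2*Transposition.transpose a b x"
        by (cases "x = a"; cases "x = b") (auto simp: transpose_def)
      then show ?thesis unfolding e1 e2 using o by (simp add: transpose_def)
    qed
    then show ?thesis using L R0 by simp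
  next
    case False
    have ab: "1 \<le> a" "a \<le> N" "1 \<le> b" "b \<le> N" using assms(1,2) by auto
    have ne: "y \<noteq> 2*a" "y \<noteq> 2*b" "y \<noteq> 2*a-1" "y \<noteq> 2*b-1" using False ab by arith+
    have "Dp N (Transposition.transpose a b \<circ> p) y = y" "Dp N p y = y" using False by (simp_all only: Dp_def if_False)
    then show ?thesis using ne by (simp add: transpose_def)
  qed
qed

lemma Dp_sign:
  assumes "p permutes {1..N}"
  shows "Dp N p permutes {1..2*N} \<and> sign (Dp N p) = 1"
  using assms finite_atLeastAtMost
proof (induction rule: permutes_induct)
  case id
  have e0: "Dp N id = id" by (auto simp: Dp_def)
  show ?case unfolding e0 by (intro conjI permutes_id sign_id)
next
  case (swap a b p)
  have e: "Dp N (Transposition.transpose a b \<circ> p) =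
     Transposition.transpose (2*a-1) (2*b-1) \<circ> Transposition.transpose (2*a) (2*b) \<circ> Dp N p"
    using swap Dp_swap by blast
  have pt1: "Transposition.transpose (2*a-1) (2*b-1) permutes {1..2*N}"
    using swap(1,2) by (intro permutes_swap_id) auto
  have pt2: "Transposition.transpose (2*a) (2*b) permutes {1..2*N}"
    using swap(1,2) by (intro permutes_swap_id) auto
  have "Dp N (Transposition.transpose a b \<circ> p) permutes {1..2*N}"
    unfolding e comp_assoc by (rule permutes_compose[OF permutes_compose[OF conjunct1[OF swap.IH] pt2] pt1])
  moreover have "sign (Dp N (Transposition.transpose a b \<circ> p)) = 1"
  proof -
    have p1: "permutation (Transposition.transpose (2*a-1) (2*b-1))" by (rule permutation_swap_id)
    have p2: "permutation (Transposition.transpose (2*a) (2*b))" by (rule permutation_swap_id)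
    have p3: "permutation (Dp N p)" using conjunct1[OF swap.IH] by (rule perm_int)
    have ne: "2*a-1 \<noteq> 2*b-1" "2*a \<noteq> 2*b" using swap(1,2,3) by auto
    have "sign (Transposition.transpose (2*a-1) (2*b-1) \<circ> Transposition.transpose (2*a) (2*b) \<circ> Dp N p)
       = sign (Transposition.transpose (2*a-1) (2*b-1)) * (sign (Transposition.transpose (2*a) (2*b)) * sign (Dp N p))"
      using sign_compose[OF p1 permutation_compose[OF p2 p3]] sign_compose[OF p2 p3] by (simp add: o_assoc)
    also have "\<dots> = 1" using swap.IH ne by (simp add: sign_swap_id)
    finally show ?thesis unfolding e .
  qed
  ultimately show ?case by blast
qed


definition qperm :: "nat \<Rightarrow> nat \<Rightarrow> nat \<Rightarrow> nat" where
  "qperm m n k = (if 1 \<le> k \<and> k \<le> m*n then n*((k-1) mod m) + (k-1) div m + 1 else k)"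

lemma bound_aux:
  fixes m n t :: nat
  assumes "t < m*n"
  shows "t div m < n" "t mod m < m" "n*(t mod m) + t div m < m*n"
proof -
  show 1: "t div m < n" using assms by (simp add: less_mult_imp_div_less mult.commute)
  have "m > 0" using assms by (cases m) auto
  then show 2: "t mod m < m" by simp
  have "t mod m \<le> m - 1" using 2 by linarith
  then have "n*(t mod m) + t div m \<le> n*(m-1) + t div m" using mult_le_mono2 by simp
  also have "\<dots> < n*(m-1) + n" using 1 by simp
  also have "\<dots> = m*n" using \<open>m>0\<close> by (cases m) (auto simp: algebra_simps)
  finally show "n*(t mod m) + t div m < m*n" .
qed

lemma qperm_permutes: "qperm m n permutes {1..m*n}"
proof (rule bij_imp_permutes)
  have inj: "inj_on (qperm m n) {1..m*n}"
  proof (rule inj_onI)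
    fix a b assume a: "a \<in> {1..m*n}" and b: "b \<in> {1..m*n}" and e: "qperm m n a = qperm m n b"
    have ba: "(a-1) div m < n" "(b-1) div m < n" using a b bound_aux(1)[of "a-1" m n] bound_aux(1)[of "b-1" m n] by auto
    have e2: "n*((a-1) mod m) + (a-1) div m = n*((b-1) mod m) + (b-1) div m"
      using e a b by (simp add: qperm_def)
    have "((a-1) div m) = (b-1) div m"
      using arg_cong[OF e2, of "\<lambda>x. x mod n"] ba by simp
    moreover have "(a-1) mod m = (b-1) mod m"
    proof -
      have "n*((a-1) mod m) = n*((b-1) mod m)" using e2 calculation by simp
      moreover have "n > 0" using ba by simp
      ultimately show ?thesis by simp
    qed
    ultimately have "a - 1 = b - 1" by (metis div_mult_mod_eq)
    moreover have "1 \<le> a" "1 \<le> b" using a b by auto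
    ultimately show "a = b" by linarith
  qed
  moreover have "qperm m n ` {1..m*n} \<subseteq> {1..m*n}"
  proof
    fix y assume "y \<in> qperm m n ` {1..m*n}"
    then obtain a where a: "a \<in> {1..m*n}" "y = qperm m n a" by blast
    have "n*((a-1) mod m) + (a-1) div m < m*n" using bound_aux(3)[of "a-1" m n] a by auto
    then show "y \<in> {1..m*n}" using a by (simp add: qperm_def)
  qed
  ultimately show "bij_betw (qperm m n) {1..m*n} {1..m*n}"
    by (simp add: bij_betw_def endo_inj_surj)
  show "\<And>x. x \<notin> {1..m*n} \<Longrightarrow> qperm m n x = x" by (auto simp: qperm_def)
qed

lemma aux_ineq: "2*(X+1) \<le> 2*(Y::nat) \<Longrightarrow> c < 2 \<Longrightarrow> 2*X + c + 1 \<le> 2*Y" 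
proof -
  assume a: "2*(X+1) \<le> 2*Y" "c < 2"
  then have "X + 1 \<le> Y" by simp
  then show ?thesis using a(2) by linarith
qed

definition Phi :: "nat \<Rightarrow> nat \<Rightarrow> (nat \<Rightarrow> nat \<Rightarrow> nat) \<Rightarrow> nat \<Rightarrow> nat" where
  "Phi m n ss p = (if 1 \<le> p \<and> p \<le> 2*m*n then
      2*n*(((p-1) div 2) mod m) + ss (((p-1) div 2) mod m + 1) (2*(((p-1) div 2) div m) + (p-1) mod 2 + 1)
    else p)"

lemma Phi_decomp: "Phi m n ss = Lgen (2*n) m ss \<circ> Dp (m*n) (qperm m n)"
proof
  fix p
  show "Phi m n ss p = (Lgen (2*n) m ss \<circ> Dp (m*n) (qperm m n)) p"
  proof (cases "1 \<le> p \<and> p \<le> 2*m*n")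
    case True
    define t where "t = (p-1) div 2"
    define c where "c = (p-1) mod 2"
    have c2: "c < 2" by (simp add: c_def)
    have tl: "t < m*n" using True unfolding t_def by auto
    have b: "t div m < n" "t mod m < m" "n*(t mod m) + t div m < m*n" using bound_aux[OF tl] by auto
    have q: "qperm m n (t+1) = n*(t mod m) + t div m + 1"
      using tl unfolding qperm_def by (simp only: if_P add_diff_cancel_right' le_add2 Suc_le_eq add.commute[of t 1] plus_1_eq_Suc) simp
    have True': "1 \<le> p \<and> p \<le> 2*(m*n)" using True by (simp only: mult.assoc)
    have D0: "Dp (m*n) (qperm m n) p = 2*(qperm m n (t+1) - 1) + c + 1"
      unfolding Dp_def t_def c_def using True' by (simp only: if_P if_True)
    define y where "y = 2*(n*(t mod m) + t div m) + c + 1"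
    have D: "Dp (m*n) (qperm m n) p = y" unfolding D0 q y_def by simp
    have r: "2*(t div m) + c < 2*n" using b c2 by linarith
    have y1: "y - 1 = 2*n*(t mod m) + (2*(t div m) + c)" by (simp add: y_def algebra_simps)
    have dv: "(y-1) div (2*n) = t mod m" "(y-1) mod (2*n) = 2*(t div m) + c"
      unfolding y1 using r by simp_all
    have yr: "1 \<le> y \<and> y \<le> 2*n*m"
    proof -
      have "2*(n*(t mod m) + t div m + 1) \<le> 2*(m*n)" using b(3) by simp
      then have "2*(n*(t mod m) + t div m) + c + 1 \<le> 2*(m*n)" using c2 aux_ineq by blast
      then show ?thesis by (simp add: y_def algebra_simps)
    qed
    have L: "Lgen (2*n) m ss y = 2*n*(t mod m) + ss (t mod m + 1) (2*(t div m) + c + 1)"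
      unfolding Lgen_def using yr by (simp only: if_P dv)
    have P: "Phi m n ss p = 2*n*(t mod m) + ss (t mod m + 1) (2*(t div m) + c + 1)"
      unfolding Phi_def t_def c_def using True by (simp only: if_P if_True)
    show ?thesis unfolding P comp_apply D L ..
  next
    case False
    have f1: "\<not> (1 \<le> p \<and> p \<le> 2*(m*n))" using False by (simp add: mult.assoc)
    have f2: "\<not> (1 \<le> p \<and> p \<le> 2*n*m)" using False by (simp add: ac_simps)
    have "Dp (m*n) (qperm m n) p = p" using f1 by (simp only: Dp_def if_False)
    moreover have "Lgen (2*n) m ss p = p" using f2 by (simp only: Lgen_def if_False)
    moreover have "Phi m n ss p = p" using False by (simp only: Phi_def if_False)
    ultimately show ?thesis by simp
  qed
qed

lemma Phi_sign:
  assumes "\<forall>s\<in>{1..m}. ss s permutes {1..2*n}"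
  shows "Phi m n ss permutes {1..2*m*n} \<and> sign (Phi m n ss) = (\<Prod>s=1..m. sign (ss s))"
proof -
  have L: "Lgen (2*n) m ss permutes {1..2*m*n}" "sign (Lgen (2*n) m ss) = (\<Prod>s=1..m. sign (ss s))"
    using Lgen_sign[OF assms] by (auto simp: mult.commute mult.left_commute)
  have D: "Dp (m*n) (qperm m n) permutes {1..2*m*n}" "sign (Dp (m*n) (qperm m n)) = 1"
    using Dp_sign[OF qperm_permutes] by (auto simp: mult.assoc)
  have pp: "permutation (Lgen (2*n) m ss)" "permutation (Dp (m*n) (qperm m n))"
    using L(1) D(1) perm_int by blast+
  show ?thesis unfolding Phi_decomp
    using permutes_compose[OF D(1) L(1)] sign_compose[OF pp] L(2) D(2) by simp
qed

lemma pos_calc: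
  fixes m a b c :: nat
  assumes "b < m" "c < 2"
  shows "(2*m*a + 2*b + c + 1 - 1) div 2 mod m = b" "(2*m*a + 2*b + c + 1 - 1) div 2 div m = a"
        "(2*m*a + 2*b + c + 1 - 1) mod 2 = c"
proof -
  have e: "(2*m*a + 2*b + c + 1 - 1) div 2 = m*a + b" using assms(2) by simp
  show "(2*m*a + 2*b + c + 1 - 1) div 2 mod m = b" unfolding e using assms by simp
  show "(2*m*a + 2*b + c + 1 - 1) div 2 div m = a" unfolding e using assms by simp
  have eq: "2*m*a + 2*b + c + 1 - 1 = c + 2*(m*a+b)" by simp
  have "(c + 2*(m*a+b)) mod 2 = c" using assms(2) by presburger
  then show "(2*m*a + 2*b + c + 1 - 1) mod 2 = c" unfolding eq .
qed

lemma pos_range: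
  fixes m n a b c :: nat
  assumes "a < n" "b < m" "c < 2"
  shows "1 \<le> 2*m*a + 2*b + c + 1 \<and> 2*m*a + 2*b + c + 1 \<le> 2*m*n"
proof -
  have "a + 1 \<le> n" using assms by simp
  then have "2*m*(a+1) \<le> 2*m*n" by (rule mult_le_mono2)
  moreover have "2*b + c + 1 \<le> 2*m" using assms by linarith
  ultimately show ?thesis by (simp add: algebra_simps)
qed

lemma pos_decomp:
  fixes m n p :: nat
  assumes "1 \<le> p" "p \<le> 2*m*n"
  obtains a b c where "a < n" "b < m" "c < 2" "p = 2*m*a + 2*b + c + 1"
proof -
  have mpos: "m > 0" using assms by (cases m) auto
  define a where "a = (p-1) div (2*m)"
  define k where "k = (p-1) mod (2*m)"
  have pk: "p - 1 = 2*m*a + k" unfolding a_def k_def by simp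
  have kl: "k < 2*m" unfolding k_def using mpos by simp
  have al: "a < n" unfolding a_def using assms
    by (simp add: less_mult_imp_div_less mult.commute)
  have "k = 2*(k div 2) + k mod 2" by simp
  then have pe: "p = 2*m*a + 2*(k div 2) + k mod 2 + 1" using pk assms by linarith
  have "k div 2 < m" using kl by linarith
  moreover have "k mod 2 < 2" by simp
  ultimately show ?thesis using that[OF al _ _ pe] by blast
qed

lemma Phi_pos:
  assumes "a < n" "b < m" "c < 2"
  shows "Phi m n ss (2*m*a + 2*b + c + 1) = 2*n*b + ss (b+1) (2*a+c+1)"
proof -
  have r: "1 \<le> 2*m*a + 2*b + c + 1 \<and> 2*m*a + 2*b + c + 1 \<le> 2*m*n" using pos_range[OF assms] .
  note pc = pos_calc[OF assms(2,3), of a]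
  have "Phi m n ss (2*m*a + 2*b + c + 1) = 2*n*(((2*m*a + 2*b + c + 1-1) div 2) mod m) + ss (((2*m*a + 2*b + c + 1-1) div 2) mod m + 1) (2*(((2*m*a + 2*b + c + 1-1) div 2) div m) + (2*m*a + 2*b + c + 1-1) mod 2 + 1)"
    using r unfolding Phi_def by (simp only: if_P if_True)
  also have "\<dots> = 2*n*b + ss (b+1) (2*a+c+1)" unfolding pc ..
  finally show ?thesis .
qed

lemma concat_pairs:
  "length (concat (map (\<lambda>x. [f x, g x]) xs)) = 2 * length xs"
  "k < 2 * length xs \<Longrightarrow> concat (map (\<lambda>x. [f x, g x]) xs) ! k =
     (if even k then f (xs ! (k div 2)) else g (xs ! (k div 2)))"
  "set (concat (map (\<lambda>x. [f x, g x]) xs)) = f ` set xs \<union> g ` set xs"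
proof -
  show "length (concat (map (\<lambda>x. [f x, g x]) xs)) = 2 * length xs"
    by (induction xs) auto
  show "set (concat (map (\<lambda>x. [f x, g x]) xs)) = f ` set xs \<union> g ` set xs"
    by (induction xs) auto
  show "k < 2 * length xs \<Longrightarrow> concat (map (\<lambda>x. [f x, g x]) xs) ! k =
     (if even k then f (xs ! (k div 2)) else g (xs ! (k div 2)))"
  proof (induction xs arbitrary: k)
    case Nil
    then show ?case by simp
  next
    case (Cons x xs)
    show ?case
    proof (cases "k < 2")
      case True
      then consider "k = 0" | "k = 1" by linarith
      then show ?thesis by cases auto
    next
      case False
      define k' where "k' = k - 2"
      have k': "k = Suc (Suc k')" using False unfolding k'_def by simp
      have "k' < 2 * length xs" using Cons.prems k' by simp
      then show ?thesis using Cons.IH[of k'] k' by simp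
    qed
  qed
qed

lemma Eblocks_permutes: "\<sigma> \<in> Eblocks m n \<Longrightarrow> \<sigma> permutes {1..2*m*n}"
  by (simp add: Eblocks_def)

lemma block_props:
  assumes s: "\<sigma> \<in> Eblocks m n" and i: "i \<in> {1..n}"
  defines "xs \<equiv> map \<sigma> [2*m*(i-1)+1..<2*m*i+1]"
  shows "length xs = 2*m" "\<And>k. k < 2*m \<Longrightarrow> xs ! k = \<sigma> (2*m*(i-1) + k + 1)"
        "sorted_wrt (<) xs" "set xs \<subseteq> {1..2*m*n}"
proof -
  have ie: "2*m*i = 2*m*(i-1) + 2*m" using i by (cases i) auto
  show len: "length xs = 2*m" unfolding xs_def ie by simp
  show nth: "\<And>k. k < 2*m \<Longrightarrow> xs ! k = \<sigma> (2*m*(i-1) + k + 1)" unfolding xs_def ie by (simp del: upt_Suc)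
  show "sorted_wrt (<) xs"
  proof (subst sorted_wrt_iff_nth_Suc_transp)
    show "transp ((<) :: nat \<Rightarrow> nat \<Rightarrow> bool)" by (rule transp_on_less)
    show "\<forall>k. Suc k < length xs \<longrightarrow> xs ! k < xs ! Suc k"
    proof (intro allI impI)
      fix k assume k: "Suc k < length xs"
      have j: "k + 1 \<in> {1..<2*m}" using k len by simp
      have "\<sigma> (2*m*(i-1) + (k+1)) < \<sigma> (2*m*(i-1) + (k+1) + 1)"
      proof -
        have "\<forall>i\<in>{1..n}. \<forall>j\<in>{1..<2*m}. \<sigma> (2*m*(i-1)+j) < \<sigma> (2*m*(i-1)+j+1)"
          using s unfolding Eblocks_def mem_Collect_eq by (rule conjunct2)
        from bspec[OF bspec[OF this i] j] show ?thesis .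
      qed
        moreover have "xs ! k = \<sigma> (2*m*(i-1) + (k+1))" using nth[of k] k len by simp
      moreover have "xs ! Suc k = \<sigma> (2*m*(i-1) + (k+1) + 1)" using nth[of "Suc k"] k len by simp
      ultimately show "xs ! k < xs ! Suc k" by simp
    qed
  qed
  show "set xs \<subseteq> {1..2*m*n}"
  proof
    fix y assume "y \<in> set xs"
    then obtain k where k: "k < length xs" "y = xs ! k" unfolding in_set_conv_nth by blast
    have "2*m*(i-1) + k + 1 \<le> 2*m*(i-1) + 2*m" using k len by linarith
    also have "\<dots> = 2*m*i" using ie by linarith
    also have "\<dots> \<le> 2*m*n" using i by (intro mult_le_mono2) simp
    finally have "2*m*(i-1) + k + 1 \<in> {1..2*m*n}" by simp
    then have "\<sigma> (2*m*(i-1) + k + 1) \<in> {1..2*m*n}"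
      by (simp only: permutes_in_image[OF Eblocks_permutes[OF s]])
    moreover have "y = \<sigma> (2*m*(i-1) + k + 1)" using k nth len by simp
    ultimately show "y \<in> {1..2*m*n}" by simp
  qed
qed

definition Good :: "nat \<Rightarrow> nat \<Rightarrow> (nat \<Rightarrow> nat) set" where
  "Good m n = {\<sigma> \<in> Eblocks m n. \<forall>a<n. \<forall>b<m. \<forall>c<2.
      2*n*b < \<sigma> (2*m*a+2*b+c+1) \<and> \<sigma> (2*m*a+2*b+c+1) \<le> 2*n*b + 2*n}"

definition Psi :: "nat \<Rightarrow> nat \<Rightarrow> (nat \<Rightarrow> nat) \<Rightarrow> nat \<Rightarrow> nat \<Rightarrow> nat" where
  "Psi m n \<sigma> = (\<lambda>s\<in>{1..m}. \<lambda>k. if 1 \<le> k \<and> k \<le> 2*n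
      then \<sigma> (2*m*((k-1) div 2) + 2*(s-1) + (k-1) mod 2 + 1) - 2*n*(s-1) else k)"

lemma PiE_perms:
  assumes "ss \<in> PiE {1..m} (\<lambda>_. Epairs n)" "s \<in> {1..m}"
  shows "ss s permutes {1..2*n}" "\<And>i. i \<in> {1..n} \<Longrightarrow> ss s (2*i-1) < ss s (2*i)"
proof -
  have "ss s \<in> Epairs n" using assms by blast
  then show "ss s permutes {1..2*n}" "\<And>i. i \<in> {1..n} \<Longrightarrow> ss s (2*i-1) < ss s (2*i)"
    unfolding Epairs_def by blast+
qed

lemma k_decomp:
  fixes k n :: nat
  assumes "1 \<le> k" "k \<le> 2*n"
  shows "k = 2*((k-1) div 2) + (k-1) mod 2 + 1" "(k-1) div 2 < n" "(k-1) mod 2 < 2"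
proof -
  have e: "k - 1 = 2*((k-1) div 2) + (k-1) mod 2" by simp
  show "k = 2*((k-1) div 2) + (k-1) mod 2 + 1" using e assms by linarith
  show "(k-1) div 2 < n" using e assms by linarith
  show "(k-1) mod 2 < 2" by simp
qed

lemma Phi_Good:
  assumes ss: "ss \<in> PiE {1..m} (\<lambda>_. Epairs n)"
  shows "Phi m n ss \<in> Good m n"
proof -
  have P: "\<forall>s\<in>{1..m}. ss s permutes {1..2*n}" using PiE_perms(1)[OF ss] by blast
  have perm: "Phi m n ss permutes {1..2*m*n}" using Phi_sign[OF P] by blast
  have rng: "ss (b+1) (2*a+c+1) \<in> {1..2*n}" if "a < n" "b < m" "c < 2" for a b c
  proof -
    have "2*a+c+1 \<le> 2*n" using that by linarith
    then have "2*a+c+1 \<in> {1..2*n}" by simp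
    then show ?thesis using permutes_in_image[OF PiE_perms(1)[OF ss, of "b+1"]] that by simp
  qed
  have inc: "Phi m n ss (2*m*(i-1)+j) < Phi m n ss (2*m*(i-1)+j+1)" if i: "i \<in> {1..n}" and j: "j \<in> {1..<2*m}" for i j
  proof -
    define b where "b = (j-1) div 2"
    define c where "c = (j-1) mod 2"
    have j1: "1 \<le> j" "j \<le> 2*m" using j by auto
    have jd: "j = 2*b + c + 1" "b < m" using k_decomp[OF j1] unfolding b_def c_def by auto
    have bm: "b < m" "c < 2" using jd(2) unfolding c_def by auto
    have ia: "i - 1 < n" using i by auto
    have p1: "Phi m n ss (2*m*(i-1)+j) = 2*n*b + ss (b+1) (2*(i-1)+c+1)"
      unfolding jd(1) using Phi_pos[OF ia bm] by (simp add: add.assoc)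
    show ?thesis
    proof (cases "c = 0")
      case True
      have p2: "Phi m n ss (2*m*(i-1)+j+1) = 2*n*b + ss (b+1) (2*(i-1)+1+1)"
        using Phi_pos[OF ia bm(1), of 1 ss] unfolding jd(1) True by (simp add: add.assoc)
      have "ss (b+1) (2*i-1) < ss (b+1) (2*i)" using PiE_perms(2)[OF ss _ i, of "b+1"] bm by simp
      moreover have "2*(i-1)+1 = 2*i-1" "2*(i-1)+1+1 = 2*i" using i by auto
      ultimately show ?thesis using p1 p2 True by simp
    next
      case False
      then have c1: "c = 1" using bm by simp
      have b1: "b + 1 < m" using j jd(1) c1 by auto
      have p2: "Phi m n ss (2*m*(i-1)+j+1) = 2*n*(b+1) + ss (b+1+1) (2*(i-1)+0+1)"
        using Phi_pos[OF ia b1, of 0 ss] unfolding jd(1) c1 by (simp add: add.assoc)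
      have r1: "ss (b+1) (2*(i-1)+c+1) \<le> 2*n" using rng[OF ia bm] by simp
      have r2: "1 \<le> ss (b+1+1) (2*(i-1)+0+1)" using rng[OF ia b1, of 0] by simp
      show ?thesis unfolding p1 p2 using r1 r2 by simp
    qed
  qed
  have good: "2*n*b < Phi m n ss (2*m*a+2*b+c+1) \<and> Phi m n ss (2*m*a+2*b+c+1) \<le> 2*n*b + 2*n"
    if "a < n" "b < m" "c < 2" for a b c
    using Phi_pos[OF that, of ss] rng[OF that] by simp
  show ?thesis unfolding Good_def Eblocks_def using perm inc good by blast
qed


lemma Psi_val:
  assumes "s \<in> {1..m}" "a < n" "c < 2"
  shows "Psi m n \<sigma> s (2*a+c+1) = \<sigma> (2*m*a + 2*(s-1) + c + 1) - 2*n*(s-1)"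
proof -
  have r: "1 \<le> 2*a+c+1 \<and> 2*a+c+1 \<le> 2*n" using assms by linarith
  have d: "(2*a+c+1-1) div 2 = a" "(2*a+c+1-1) mod 2 = c" using assms(3) by auto
  have "Psi m n \<sigma> s (2*a+c+1) = (if 1 \<le> 2*a+c+1 \<and> 2*a+c+1 \<le> 2*n
      then \<sigma> (2*m*((2*a+c+1-1) div 2) + 2*(s-1) + (2*a+c+1-1) mod 2 + 1) - 2*n*(s-1) else 2*a+c+1)"
    unfolding Psi_def using assms(1) by (simp only: restrict_apply if_True)
  also have "\<dots> = \<sigma> (2*m*a + 2*(s-1) + c + 1) - 2*n*(s-1)"
    unfolding d using r by (simp only: if_True simp_thms)
  finally show ?thesis .
qed

lemma Psi_out:
  assumes "s \<in> {1..m}" "\<not> (1 \<le> k \<and> k \<le> 2*n)"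
  shows "Psi m n \<sigma> s k = k"
  unfolding Psi_def using assms by (simp only: restrict_apply if_True if_False)

lemma Psi_Phi:
  assumes ss: "ss \<in> PiE {1..m} (\<lambda>_. Epairs n)"
  shows "Psi m n (Phi m n ss) = ss"
proof
  fix s
  show "Psi m n (Phi m n ss) s = ss s"
  proof (cases "s \<in> {1..m}")
    case s: True
    show ?thesis
    proof
      fix k
      show "Psi m n (Phi m n ss) s k = ss s k"
      proof (cases "1 \<le> k \<and> k \<le> 2*n")
        case True
        then have k1: "1 \<le> k" "k \<le> 2*n" by auto
        note kd = k_decomp[OF k1]
        define a where "a = (k-1) div 2"
        define c where "c = (k-1) mod 2"
        have ke: "k = 2*a+c+1" "a < n" "c < 2" using kd unfolding a_def c_def by auto
        have sm: "s - 1 < m" using s by auto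
        have "Psi m n (Phi m n ss) s k = Phi m n ss (2*m*a + 2*(s-1) + c + 1) - 2*n*(s-1)"
          unfolding ke(1) using Psi_val[OF s ke(2,3)] .
        also have "\<dots> = 2*n*(s-1) + ss (s-1+1) (2*a+c+1) - 2*n*(s-1)"
          using Phi_pos[OF ke(2) sm ke(3)] by (rule arg_cong[where f="\<lambda>x. x - 2*n*(s-1)"])
        also have "\<dots> = ss (s-1+1) (2*a+c+1)" by (rule diff_add_inverse)
        also have "\<dots> = ss s k" using s ke(1) by simp
        finally show ?thesis .
      next
        case False
        have "ss s k = k" by (rule permutes_not_in[OF PiE_perms(1)[OF ss s]]) (use False in simp)
        then show ?thesis using Psi_out[OF s False] by simp
      qed
    qed
  next
    case False
    have "Psi m n (Phi m n ss) s = undefined" unfolding Psi_def restrict_def using False by (simp only: if_False)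
    moreover have "ss s = undefined" by (rule PiE_arb[OF ss False])
    ultimately show ?thesis by simp
  qed
qed

lemma Good_props:
  assumes "\<sigma> \<in> Good m n"
  shows "\<sigma> permutes {1..2*m*n}"
    "\<And>i j. i \<in> {1..n} \<Longrightarrow> j \<in> {1..<2*m} \<Longrightarrow> \<sigma> (2*m*(i-1)+j) < \<sigma> (2*m*(i-1)+j+1)"
    "\<And>a b c. a < n \<Longrightarrow> b < m \<Longrightarrow> c < 2 \<Longrightarrow> 2*n*b < \<sigma> (2*m*a+2*b+c+1)"
    "\<And>a b c. a < n \<Longrightarrow> b < m \<Longrightarrow> c < 2 \<Longrightarrow> \<sigma> (2*m*a+2*b+c+1) \<le> 2*n*b + 2*n"
  using assms unfolding Good_def Eblocks_def by blast+

lemma Phi_Psi: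
  assumes g: "\<sigma> \<in> Good m n"
  shows "Phi m n (Psi m n \<sigma>) = \<sigma>"
proof
  fix p
  show "Phi m n (Psi m n \<sigma>) p = \<sigma> p"
  proof (cases "1 \<le> p \<and> p \<le> 2*m*n")
    case True
    then have p1: "1 \<le> p" "p \<le> 2*m*n" by auto
    obtain a b c where abc: "a < n" "b < m" "c < 2" "p = 2*m*a + 2*b + c + 1"
      using pos_decomp[OF p1] by blast
    have s: "b + 1 \<in> {1..m}" using abc by auto
    have "Phi m n (Psi m n \<sigma>) p = 2*n*b + Psi m n \<sigma> (b+1) (2*a+c+1)"
      unfolding abc(4) using Phi_pos[OF abc(1-3)] .
    also have "\<dots> = 2*n*b + (\<sigma> (2*m*a + 2*b + c + 1) - 2*n*b)"
      using Psi_val[OF s abc(1,3), of \<sigma>] by simp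
    also have "\<dots> = \<sigma> p" using Good_props(3)[OF g abc(1-3)] abc(4) by simp
    finally show ?thesis .
  next
    case False
    have "Phi m n (Psi m n \<sigma>) p = p" unfolding Phi_def using False by (simp only: if_False)
    moreover have "\<sigma> p = p" using Good_props(1)[OF g] False by (simp add: permutes_not_in)
    ultimately show ?thesis by simp
  qed
qed


lemma Psi_PiE:
  assumes g: "\<sigma> \<in> Good m n"
  shows "Psi m n \<sigma> \<in> PiE {1..m} (\<lambda>_. Epairs n)"
proof -
  have ext: "Psi m n \<sigma> \<in> extensional {1..m}" unfolding Psi_def by (rule restrict_extensional)
  have "Psi m n \<sigma> s \<in> Epairs n" if s: "s \<in> {1..m}" for s
  proof -
    define f where "f = Psi m n \<sigma> s"
    define C where "C = 2*n*(s-1)"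
    have sm: "s - 1 < m" using s by auto
    have m0: "m > 0" using s by auto
    have fv: "f (2*a+c+1) = \<sigma> (2*m*a + 2*(s-1) + c + 1) - C" if "a < n" "c < 2" for a c
      unfolding f_def C_def using Psi_val[OF s that] .
    have lo: "C < \<sigma> (2*m*a + 2*(s-1) + c + 1)" if "a < n" "c < 2" for a c
      unfolding C_def using Good_props(3)[OF g that(1) sm that(2)] .
    have hi: "\<sigma> (2*m*a + 2*(s-1) + c + 1) \<le> C + 2*n" if "a < n" "c < 2" for a c
      unfolding C_def using Good_props(4)[OF g that(1) sm that(2)] .
    have dec: "\<exists>a c. a < n \<and> c < 2 \<and> k = 2*a+c+1" if "k \<in> {1..2*n}" for k
    proof -
      have k1: "1 \<le> k" "k \<le> 2*n" using that by auto
      show ?thesis using k_decomp[OF k1] by blast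
    qed
    have rng: "f k \<in> {1..2*n}" if kk: "k \<in> {1..2*n}" for k
    proof -
      obtain a c where ac: "a < n" "c < 2" "k = 2*a+c+1" using dec[OF kk] by blast
      show ?thesis using fv[OF ac(1,2)] lo[OF ac(1,2)] hi[OF ac(1,2)] ac(3) by auto
    qed
    have inj: "inj_on f {1..2*n}"
    proof (rule inj_onI)
      fix k1 k2 assume k1: "k1 \<in> {1..2*n}" and k2: "k2 \<in> {1..2*n}" and e: "f k1 = f k2"
      obtain a1 c1 where ac1: "a1 < n" "c1 < 2" "k1 = 2*a1+c1+1" using dec[OF k1] by blast
      obtain a2 c2 where ac2: "a2 < n" "c2 < 2" "k2 = 2*a2+c2+1" using dec[OF k2] by blast
      have "\<sigma> (2*m*a1 + 2*(s-1) + c1 + 1) - C = \<sigma> (2*m*a2 + 2*(s-1) + c2 + 1) - C"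
        using e fv[OF ac1(1,2)] fv[OF ac2(1,2)] ac1(3) ac2(3) by simp
      then have "\<sigma> (2*m*a1 + 2*(s-1) + c1 + 1) = \<sigma> (2*m*a2 + 2*(s-1) + c2 + 1)"
        using lo[OF ac1(1,2)] lo[OF ac2(1,2)] by linarith
      then have "2*m*a1 + 2*(s-1) + c1 + 1 = 2*m*a2 + 2*(s-1) + c2 + 1"
        using permutes_inj[OF Good_props(1)[OF g]] by (simp add: inj_eq)
      then have e2: "2*(m*a1) + c1 = 2*(m*a2) + c2" by simp
      have "(2*(m*a1) + c1) mod 2 = (2*(m*a2) + c2) mod 2" using e2 by simp
      then have "c1 = c2" using ac1(2) ac2(2) by simp
      then have "m*a1 = m*a2" using e2 by simp
      then have "a1 = a2" using m0 by simp
      then show "k1 = k2" using ac1(3) ac2(3) \<open>c1 = c2\<close> by simp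
    qed
    have img: "f ` {1..2*n} \<subseteq> {1..2*n}" using rng by blast
    have bij: "bij_betw f {1..2*n} {1..2*n}"
      unfolding bij_betw_def using inj endo_inj_surj[OF finite_atLeastAtMost img inj] by blast
    have out: "f k = k" if "k \<notin> {1..2*n}" for k
      unfolding f_def using Psi_out[OF s] that by simp
    have perm: "f permutes {1..2*n}" using bij_imp_permutes[OF bij out] .
    have pairs: "f (2*i-1) < f (2*i)" if i: "i \<in> {1..n}" for i
    proof -
      have ia: "i - 1 < n" using i by auto
      have e1: "2*i-1 = 2*(i-1)+0+1" "2*i = 2*(i-1)+1+1" using i by auto
      have j: "2*(s-1)+1 \<in> {1..<2*m}" using s by auto
      have lt: "\<sigma> (2*m*(i-1) + (2*(s-1)+1)) < \<sigma> (2*m*(i-1) + (2*(s-1)+1) + 1)"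
        using Good_props(2)[OF g i j] .
      have v1: "f (2*i-1) = \<sigma> (2*m*(i-1) + (2*(s-1)+1)) - C"
        unfolding e1(1) using fv[OF ia, of 0] by (simp add: add.assoc)
      have v2: "f (2*i) = \<sigma> (2*m*(i-1) + (2*(s-1)+1) + 1) - C"
        unfolding e1(2) using fv[OF ia, of 1] by (simp add: add.assoc)
      have l1: "C < \<sigma> (2*m*(i-1) + (2*(s-1)+1))" using lo[OF ia, of 0] by (simp add: add.assoc)
      show ?thesis unfolding v1 v2 using lt l1 by linarith
    qed
    show ?thesis unfolding Epairs_def f_def[symmetric] using perm pairs by blast
  qed
  then show ?thesis using ext by (simp add: PiE_iff)
qed

lemma bad_zero:
  fixes M :: "nat list \<Rightarrow> 'a::field_char_0"
  assumes M_zero: "\<forall>i. length i = 2*m \<and> sorted_wrt (<) i \<and> set i \<subseteq> {1..2*m*n}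
          \<and> \<not> (\<exists>r. length r = 2*m \<and> set r \<subseteq> {1..2*n}
                  \<and> (\<forall>k<2*m. i ! k = 2*n*(k div 2) + r ! k)) \<longrightarrow> M i = 0"
  and s: "\<sigma> \<in> Eblocks m n" and ng: "\<sigma> \<notin> Good m n"
  shows "(\<Prod>i=1..n. M (map \<sigma> [2*m*(i-1)+1..<2*m*i+1])) = 0"
proof -
  obtain a b c where abc: "a < n" "b < m" "c < 2"
    and bad: "\<not> (2*n*b < \<sigma> (2*m*a+2*b+c+1) \<and> \<sigma> (2*m*a+2*b+c+1) \<le> 2*n*b + 2*n)"
  proof -
    have "\<not> (\<forall>a<n. \<forall>b<m. \<forall>c<2. 2*n*b < \<sigma> (2*m*a+2*b+c+1) \<and> \<sigma> (2*m*a+2*b+c+1) \<le> 2*n*b + 2*n)"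
      using s ng unfolding Good_def by blast
    then show ?thesis using that by blast
  qed
  define i where "i = a + 1"
  have i: "i \<in> {1..n}" using abc unfolding i_def by auto
  define xs where "xs = map \<sigma> [2*m*(i-1)+1..<2*m*i+1]"
  note bp = block_props[OF s i, folded xs_def]
  define k where "k = 2*b+c"
  have k: "k < 2*m" using abc unfolding k_def by linarith
  have kd: "k div 2 = b" using abc unfolding k_def by auto
  have xk: "xs ! k = \<sigma> (2*m*a+2*b+c+1)" using bp(2)[OF k] unfolding i_def k_def by (simp add: add.assoc)
  have nor: "\<not> (\<exists>r. length r = 2*m \<and> set r \<subseteq> {1..2*n} \<and> (\<forall>k<2*m. xs ! k = 2*n*(k div 2) + r ! k))"
  proof
    assume "\<exists>r. length r = 2*m \<and> set r \<subseteq> {1..2*n} \<and> (\<forall>k<2*m. xs ! k = 2*n*(k div 2) + r ! k)"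
    then obtain r where r: "length r = 2*m" "set r \<subseteq> {1..2*n}" "\<forall>k<2*m. xs ! k = 2*n*(k div 2) + r ! k"
      by blast
    have "r ! k \<in> set r" using r(1) k by simp
    then have rk: "r ! k \<in> {1..2*n}" using r(2) by blast
    have "\<sigma> (2*m*a+2*b+c+1) = 2*n*b + r ! k" using r(3) k xk kd by simp
    then show False using bad rk by auto
  qed
  have "M xs = 0"
    by (rule M_zero[THEN spec[of _ xs], THEN mp]) (intro conjI bp(1) bp(3) bp(4) nor)
  then have "\<exists>i\<in>{1..n}. M (map \<sigma> [2*m*(i-1)+1..<2*m*i+1]) = 0" using i unfolding xs_def by blast
  then show ?thesis by (simp add: prod_zero_iff)
qed

lemma term_eq:
  fixes M B :: "nat list \<Rightarrow> 'a::field_char_0"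
  assumes M_blk: "\<forall>i r. length i = 2*m \<and> sorted_wrt (<) i \<and> set i \<subseteq> {1..2*m*n}
          \<and> length r = 2*m \<and> set r \<subseteq> {1..2*n}
          \<and> (\<forall>k<2*m. i ! k = 2*n*(k div 2) + r ! k) \<longrightarrow> M i = B r"
  and ss: "ss \<in> PiE {1..m} (\<lambda>_. Epairs n)" and i: "i \<in> {1..n}"
  shows "M (map (Phi m n ss) [2*m*(i-1)+1..<2*m*i+1]) = B (concat (map (\<lambda>s. [ss s (2*i-1), ss s (2*i)]) [1..<m+1]))"
proof -
  define xs where "xs = map (Phi m n ss) [2*m*(i-1)+1..<2*m*i+1]"
  define r where "r = concat (map (\<lambda>s. [ss s (2*i-1), ss s (2*i)]) [1..<m+1])"
  have PE: "Phi m n ss \<in> Eblocks m n" using Phi_Good[OF ss] unfolding Good_def by blast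
  note bp = block_props[OF PE i, folded xs_def]
  have rl: "length r = 2*m" unfolding r_def concat_pairs(1) by simp
  have rs: "set r \<subseteq> {1..2*n}"
  proof
    fix y assume y: "y \<in> set r"
    have i1: "1 \<le> i" "i \<le> n" using i by auto
    have a1: "2*i-1 \<in> {1..2*n}" unfolding atLeastAtMost_iff using i1 by (intro conjI; linarith)
    have a2: "2*i \<in> {1..2*n}" unfolding atLeastAtMost_iff using i1 by (intro conjI; linarith)
    from y obtain s where s: "s \<in> set [1..<m+1]" and ys: "y = ss s (2*i-1) \<or> y = ss s (2*i)"
      unfolding r_def concat_pairs(3) by blast
    have sm: "s \<in> {1..m}" using s by (simp del: upt_Suc)
    have P: "ss s permutes {1..2*n}" by (rule PiE_perms(1)[OF ss sm])
    have "ss s (2*i-1) \<in> {1..2*n}" using a1 by (simp only: permutes_in_image[OF P])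
    moreover have "ss s (2*i) \<in> {1..2*n}" using a2 by (simp only: permutes_in_image[OF P])
    ultimately show "y \<in> {1..2*n}" using ys by blast
  qed
  have rk: "xs ! k = 2*n*(k div 2) + r ! k" if k: "k < 2*m" for k
  proof -
    define b where "b = k div 2"
    define c where "c = k mod 2"
    have bc: "b < m" "c < 2" "k = 2*b + c" using k unfolding b_def c_def by auto
    have ia: "i - 1 < n" using i by auto
    have "xs ! k = Phi m n ss (2*m*(i-1) + 2*b + c + 1)" using bp(2)[OF k] bc(3) by (simp add: add.assoc)
    also have "\<dots> = 2*n*b + ss (b+1) (2*(i-1)+c+1)" using Phi_pos[OF ia bc(1,2)] .
    finally have x: "xs ! k = 2*n*b + ss (b+1) (2*(i-1)+c+1)" .
    have kl: "k < 2 * length [1..<m+1]" using k by simp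
    have nb: "[1..<m+1] ! (k div 2) = b + 1" using bc(1) unfolding b_def by (simp del: upt_Suc)
    have "r ! k = (if even k then ss (b+1) (2*i-1) else ss (b+1) (2*i))"
      unfolding r_def concat_pairs(2)[OF kl] nb ..
    also have "\<dots> = ss (b+1) (2*(i-1)+c+1)"
    proof (cases "even k")
      case True
      then have "c = 0" unfolding c_def by presburger
      moreover have "2*(i-1)+0+1 = 2*i-1" using i by auto
      ultimately show ?thesis using True by simp
    next
      case False
      then have "c = 1" unfolding c_def by presburger
      moreover have "2*(i-1)+1+1 = 2*i" using i by auto
      ultimately show ?thesis using False by simp
    qed
    finally show ?thesis using x unfolding b_def by simp
  qed
  have "M xs = B r"
    by (rule M_blk[THEN spec[of _ xs], THEN spec[of _ r], THEN mp]) (intro conjI bp(1) bp(3) bp(4) rl rs allI impI rk)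
  then show ?thesis unfolding xs_def r_def .
qed

theorem proposition6p1:
  fixes m n :: nat and B M :: "nat list \<Rightarrow> 'a::field_char_0"
  assumes "m > 0" and "n > 0"
    and B_anti: "\<forall>xs s. length xs = 2*m \<and> set xs \<subseteq> {1..2*n} \<and> s \<in> {1..m} \<longrightarrow>
          B (xs[2*s-2 := xs!(2*s-1), 2*s-1 := xs!(2*s-2)]) = - B xs"
    and M_anti: "\<forall>xs \<tau>. length xs = 2*m \<and> set xs \<subseteq> {1..2*m*n} \<and> \<tau> permutes {0..<2*m} \<longrightarrow>
          M (map (\<lambda>k. xs ! \<tau> k) [0..<2*m]) = of_int (sign \<tau>) * M xs"
    and M_blk: "\<forall>i r. length i = 2*m \<and> sorted_wrt (<) i \<and> set i \<subseteq> {1..2*m*n}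
          \<and> length r = 2*m \<and> set r \<subseteq> {1..2*n}
          \<and> (\<forall>k<2*m. i ! k = 2*n*(k div 2) + r ! k) \<longrightarrow> M i = B r"
    and M_zero: "\<forall>i. length i = 2*m \<and> sorted_wrt (<) i \<and> set i \<subseteq> {1..2*m*n}
          \<and> \<not> (\<exists>r. length r = 2*m \<and> set r \<subseteq> {1..2*n}
                  \<and> (\<forall>k<2*m. i ! k = 2*n*(k div 2) + r ! k)) \<longrightarrow> M i = 0"
  shows "hyperpf m n B = barvinok_hpf m n M"
proof -
  define F where "F = (\<lambda>\<sigma>. of_int (sign \<sigma>) *
        (\<Prod>i=1..n. M (map \<sigma> [2*m*(i-1)+1..<2*m*i+1])) :: 'a)"
  define G where "G = (\<lambda>ss. (\<Prod>s=1..m. of_int (sign (ss s))) *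
        (\<Prod>i=1..n. B (concat (map (\<lambda>s. [ss s (2*i-1), ss s (2*i)]) [1..<m+1]))) :: 'a)"
  have fin: "finite (Eblocks m n)"
  proof (rule finite_subset)
    show "Eblocks m n \<subseteq> {p. p permutes {1..2*m*n}}" unfolding Eblocks_def by blast
    show "finite {p. p permutes {1..2*m*n}}" by (rule finite_permutations) simp
  qed
  have sub: "Good m n \<subseteq> Eblocks m n" unfolding Good_def by blast
  have S1: "sum F (Eblocks m n) = sum F (Good m n)"
  proof (rule sum.mono_neutral_right[OF fin sub])
    show "\<forall>\<sigma>\<in>Eblocks m n - Good m n. F \<sigma> = 0"
    proof
      fix \<sigma> assume "\<sigma> \<in> Eblocks m n - Good m n"
      then have "(\<Prod>i=1..n. M (map \<sigma> [2*m*(i-1)+1..<2*m*i+1])) = 0"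
        using bad_zero[OF M_zero] by blast
      then show "F \<sigma> = 0" unfolding F_def by simp
    qed
  qed
  have S2: "sum G (PiE {1..m} (\<lambda>_. Epairs n)) = sum F (Good m n)"
  proof (rule sum.reindex_bij_witness[where i = "Psi m n" and j = "Phi m n"])
    fix ss assume ss: "ss \<in> PiE {1..m} (\<lambda>_. Epairs n)"
    show "Psi m n (Phi m n ss) = ss" using Psi_Phi[OF ss] .
    show "Phi m n ss \<in> Good m n" using Phi_Good[OF ss] .
    have P: "\<forall>s\<in>{1..m}. ss s permutes {1..2*n}" using PiE_perms(1)[OF ss] by blast
    have sg: "of_int (sign (Phi m n ss)) = (\<Prod>s=1..m. of_int (sign (ss s)) :: 'a)"
      using Phi_sign[OF P] by (simp add: of_int_prod)
    have pr: "(\<Prod>i=1..n. M (map (Phi m n ss) [2*m*(i-1)+1..<2*m*i+1])) =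
              (\<Prod>i=1..n. B (concat (map (\<lambda>s. [ss s (2*i-1), ss s (2*i)]) [1..<m+1])))"
      by (rule prod.cong[OF refl]) (rule term_eq[OF M_blk ss])
    show "F (Phi m n ss) = G ss" unfolding F_def G_def sg pr ..
  next
    fix \<sigma> assume g: "\<sigma> \<in> Good m n"
    show "Phi m n (Psi m n \<sigma>) = \<sigma>" using Phi_Psi[OF g] .
    show "Psi m n \<sigma> \<in> PiE {1..m} (\<lambda>_. Epairs n)" using Psi_PiE[OF g] .
  qed
  have "sum G (PiE {1..m} (\<lambda>_. Epairs n)) = sum F (Eblocks m n)" using S1 S2 by simp
  then show ?thesis unfolding hyperpf_def barvinok_hpf_def F_def G_def by simp
qed

end
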